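(* Let $\Gamma$ be a finitely generated group with a fixed choice of generators $\bar{\epsilon}_1,\dots,\bar{\epsilon}_n$, let $\rho:\Gamma\to SL(2,\mathbb{C})$ be a representation and set $A=(A_1,\dots,A_n)=(\rho(\bar{\epsilon}_1),\dots,\rho(\bar{\epsilon}_n))$. For $1\le j,k,l\le n$ define $\sigma_{jk}(A)=\mathsf{tr}([A_j,A_k])-2$, where $[A_j,A_k]=A_jA_kA_j^{-1}A_k^{-1}$, and $\Delta_{jkl}(A)=(\mathsf{tr}(A_jA_kA_l)-\mathsf{tr}(A_lA_kA_j))^2$. Then $\rho$ is reducible if and only if $\sigma_{jk}(A)=\Delta_{jkl}(A)=0$ for every triple $1\le j,k,l\le n$.
   Context: A representation $\rho:\Gamma\to SL(2,\mathbb{C})$ is reducible if some proper nonzero subspace of $\mathbb{C}^2$ is invariant under $\rho(\Gamma)$. *)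

theory Defs
  imports "HOL-Analysis.Analysis" "HOL-Algebra.Generated_Groups"
begin

definition SL2C :: "(complex^2^2) monoid" where
  "SL2C = \<lparr> carrier = {A. det A = 1}, mult = (\<lambda>A B. A ** B), one = mat 1 \<rparr>"

definition csubspace2 :: "(complex^2) set \<Rightarrow> bool" where
  "csubspace2 V \<longleftrightarrow> 0 \<in> V \<and> (\<forall>x\<in>V. \<forall>y\<in>V. x + y \<in> V) \<and> (\<forall>c. \<forall>x\<in>V. c *s x \<in> V)"

definition reducible_rep :: "('g, 'b) monoid_scheme \<Rightarrow> ('g \<Rightarrow> complex^2^2) \<Rightarrow> bool" where
  "reducible_rep G \<rho> \<longleftrightarrow> (\<exists>V. csubspace2 V \<and> V \<noteq> {0} \<and> V \<noteq> UNIV \<and>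
      (\<forall>g\<in>carrier G. \<forall>v\<in>V. \<rho> g *v v \<in> V))"

definition commutator2 :: "complex^2^2 \<Rightarrow> complex^2^2 \<Rightarrow> complex^2^2" where
  "commutator2 X Y = X ** Y ** matrix_inv X ** matrix_inv Y"

definition sigma2 :: "complex^2^2 \<Rightarrow> complex^2^2 \<Rightarrow> complex" where
  "sigma2 X Y = trace (commutator2 X Y) - 2"

definition Delta2 :: "complex^2^2 \<Rightarrow> complex^2^2 \<Rightarrow> complex^2^2 \<Rightarrow> complex" where
  "Delta2 X Y Z = (trace (X ** Y ** Z) - trace (Z ** Y ** X))^2"

end

theory Submission
  imports Defs
begin


lemma mult2: "((A::complex^2^2) ** B)$i$j = A$i$1*B$1$j + A$i$2*B$2$j"
  by (simp add: matrix_matrix_mult_def sum_2)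
lemma trace2: "trace (A::complex^2^2) = A$1$1 + A$2$2"
  by (simp add: trace_def sum_2)
lemma mat_eq2: "(A::complex^2^2) = B \<longleftrightarrow> A$1$1=B$1$1 \<and> A$1$2=B$1$2 \<and> A$2$1=B$2$1 \<and> A$2$2=B$2$2"
  by (auto simp: vec_eq_iff forall_2)
lemma mat1_2: "(mat 1::complex^2^2)$1$1 = 1" "(mat 1::complex^2^2)$2$2 = 1"
   "(mat 1::complex^2^2)$1$2 = 0" "(mat 1::complex^2^2)$2$1 = 0"
  by (simp_all add: mat_def)

definition adj2 :: "complex^2^2 \<Rightarrow> complex^2^2" where
  "adj2 M = vector [vector [M$2$2, - M$1$2], vector [- M$2$1, M$1$1]]"

lemma adj2_simps[simp]: "adj2 M $1$1 = M$2$2" "adj2 M $1$2 = - M$1$2"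
   "adj2 M $2$1 = - M$2$1" "adj2 M $2$2 = M$1$1"
  by (simp_all add: adj2_def)

lemma adj2_inv: assumes "det M = 1" shows "M ** adj2 M = mat 1" "adj2 M ** M = mat 1"
  using assms by (auto simp: mat_eq2 mult2 mat1_2 det_2 algebra_simps)

lemma matrix_inv2: assumes "det M = 1" shows "matrix_inv M = adj2 M"
proof -
  have ex: "\<exists>A'. M ** A' = mat 1 \<and> A' ** M = mat 1" using adj2_inv[OF assms] by blast
  then have h: "M ** matrix_inv M = mat 1 \<and> matrix_inv M ** M = mat 1"
    unfolding matrix_inv_def by (rule someI_ex)
  have "matrix_inv M = matrix_inv M ** (M ** adj2 M)" using adj2_inv[OF assms] by simp
  also have "\<dots> = (matrix_inv M ** M) ** adj2 M" by (simp add: matrix_mul_assoc)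
  also have "\<dots> = adj2 M" using h by simp
  finally show ?thesis .
qed

definition al1 :: "complex^2^2 \<Rightarrow> complex" where "al1 M = M$2$1"
definition al2 :: "complex^2^2 \<Rightarrow> complex" where "al2 M = M$2$2 - M$1$1"
definition al3 :: "complex^2^2 \<Rightarrow> complex" where "al3 M = - M$1$2"
definition cw1 where "cw1 A B = al2 A * al3 B - al3 A * al2 B"
definition cw2 where "cw2 A B = al3 A * al1 B - al1 A * al3 B"
definition cw3 where "cw3 A B = al1 A * al2 B - al2 A * al1 B"

lemma K1: assumes "det A = 1" "det B = 1"
  shows "sigma2 A B = (cw2 A B)^2 - cw1 A B * cw3 A B"
proof -
  have "sigma2 A B = trace (A ** B ** adj2 A ** adj2 B) - 2 * det A * det B"
    using assms by (simp add: sigma2_def commutator2_def matrix_inv2)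
  also have "\<dots> = (cw2 A B)^2 - cw1 A B * cw3 A B"
    by (simp add: trace2 mult2 det_2 cw1_def cw2_def cw3_def al1_def al2_def al3_def) algebra
  finally show ?thesis .
qed

lemma K2: "Delta2 A B C = (al1 C * cw1 A B + al2 C * cw2 A B + al3 C * cw3 A B)^2"
  unfolding Delta2_def
  by (simp add: trace2 mult2 cw1_def cw2_def cw3_def al1_def al2_def al3_def) algebra



definition cdet :: "complex^2 \<Rightarrow> complex^2 \<Rightarrow> complex" where
  "cdet v w = v$1 * w$2 - v$2 * w$1"

lemma cdet_q: "cdet v (M *v v) = al1 M * (v$1)^2 + al2 M * (v$1 * v$2) + al3 M * (v$2)^2"
  by (simp add: cdet_def matrix_vector_mult_def sum_2 al1_def al2_def al3_def power2_eq_square algebra_simps)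

lemma vec2_nz: "(v::complex^2) \<noteq> 0 \<longleftrightarrow> v$1 \<noteq> 0 \<or> v$2 \<noteq> 0"
  by (auto simp: vec_eq_iff forall_2)

lemma quad_root: "\<exists>x y::complex. (x \<noteq> 0 \<or> y \<noteq> 0) \<and> a * x^2 + b * (x*y) + c * y^2 = 0"
proof (cases "a = 0")
  case True then show ?thesis by (intro exI[of _ 1] exI[of _ 0]) simp
next
  case False
  define s where "s = csqrt (b^2 - 4*a*c)"
  have s2: "s^2 = b^2 - 4*a*c" by (simp add: s_def)
  define x where "x = (s - b) / (2*a)"
  have "4*a*(a * x^2 + b * (x*1) + c * 1^2) = (s - b)^2 + 2*b*(s-b) + 4*a*c"
    using False by (simp add: x_def field_simps power2_eq_square)
  also have "\<dots> = 0" using s2 by (simp add: power2_eq_square algebra_simps)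
  finally have "a * x^2 + b * (x*1) + c * 1^2 = 0" using False by simp
  then show ?thesis by (intro exI[of _ x] exI[of _ 1]) simp
qed

lemma conic_root: assumes "w2^2 = w1 * w3" "w1 \<noteq> 0 \<or> w2 \<noteq> 0 \<or> w3 \<noteq> 0"
  shows "\<exists>x y::complex. (x \<noteq> 0 \<or> y \<noteq> 0) \<and> x^2 = w1 \<and> x*y = w2 \<and> y^2 = w3"
proof (cases "w1 = 0")
  case True
  then have "w2 = 0" using assms by simp
  then have "w3 \<noteq> 0" using assms True by simp
  show ?thesis using True \<open>w2 = 0\<close> \<open>w3 \<noteq> 0\<close>
    by (intro exI[of _ 0] exI[of _ "csqrt w3"]) auto
next
  case False
  define x where "x = csqrt w1"
  have x2: "x^2 = w1" by (simp add: x_def)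
  have xnz: "x \<noteq> 0" using False x2 by auto
  have "(w2/x)^2 = w3" using x2 xnz False assms(1) by (simp add: power_divide)
  then show ?thesis using xnz x2 by (intro exI[of _ x] exI[of _ "w2/x"]) auto
qed

lemma P3r:
  fixes A :: "nat \<Rightarrow> complex^2^2"
  assumes dets: "\<forall>i\<in>I. det (A i) = 1"
    and cond: "\<forall>j\<in>I. \<forall>k\<in>I. \<forall>l\<in>I. sigma2 (A j) (A k) = 0 \<and> Delta2 (A j) (A k) (A l) = 0"
  shows "\<exists>v::complex^2. v \<noteq> 0 \<and> (\<forall>i\<in>I. cdet v (A i *v v) = 0)"
proof (cases "\<forall>i\<in>I. al1 (A i) = 0 \<and> al2 (A i) = 0 \<and> al3 (A i) = 0")
  case True
  show ?thesis
    by (rule exI[of _ "vector [1,0]"]) (auto simp: vec2_nz cdet_q True)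
next
  case False
  then obtain j where j: "j \<in> I" "al1 (A j) \<noteq> 0 \<or> al2 (A j) \<noteq> 0 \<or> al3 (A j) \<noteq> 0" by blast
  show ?thesis
  proof (cases "\<exists>k\<in>I. cw1 (A j) (A k) \<noteq> 0 \<or> cw2 (A j) (A k) \<noteq> 0 \<or> cw3 (A j) (A k) \<noteq> 0")
    case True
    then obtain k where k: "k \<in> I" "cw1 (A j) (A k) \<noteq> 0 \<or> cw2 (A j) (A k) \<noteq> 0 \<or> cw3 (A j) (A k) \<noteq> 0" by blast
    have "sigma2 (A j) (A k) = 0" using cond j k by blast
    then have "(cw2 (A j) (A k))^2 = cw1 (A j) (A k) * cw3 (A j) (A k)"
      using K1[of "A j" "A k"] dets j k by simp
    then obtain x y where xy: "x \<noteq> 0 \<or> y \<noteq> 0" "x^2 = cw1 (A j) (A k)" "x*y = cw2 (A j) (A k)"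
       "y^2 = cw3 (A j) (A k)"
      using conic_root k(2) by blast
    show ?thesis
    proof (intro exI[of _ "vector [x,y]"] conjI ballI)
      show "vector [x, y] \<noteq> (0::complex^2)" using xy by (simp add: vec2_nz)
    next
      fix l assume l: "l \<in> I"
      have "Delta2 (A j) (A k) (A l) = 0" using cond j k l by blast
      then show "cdet (vector [x, y]) (A l *v vector [x, y]) = 0"
        using xy by (simp add: K2 cdet_q)
    qed
  next
    case False
    then have par: "\<forall>k\<in>I. cw1 (A j) (A k) = 0 \<and> cw2 (A j) (A k) = 0 \<and> cw3 (A j) (A k) = 0" by blast
    obtain x y where xy: "x \<noteq> 0 \<or> y \<noteq> 0" "al1 (A j) * x^2 + al2 (A j) * (x*y) + al3 (A j) * y^2 = 0"
      using quad_root by blast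
    show ?thesis
    proof (intro exI[of _ "vector [x,y]"] conjI ballI)
      show "vector [x, y] \<noteq> (0::complex^2)" using xy by (simp add: vec2_nz)
    next
      fix k assume k: "k \<in> I"
      define Q where "Q = al1 (A k) * x^2 + al2 (A k) * (x*y) + al3 (A k) * y^2"
      have c1: "al2 (A j) * al3 (A k) - al3 (A j) * al2 (A k) = 0"
        and c2: "al3 (A j) * al1 (A k) - al1 (A j) * al3 (A k) = 0"
        and c3: "al1 (A j) * al2 (A k) - al2 (A j) * al1 (A k) = 0"
        using par k unfolding cw1_def cw2_def cw3_def by auto
      have "al1 (A j) * Q = 0" using c1 c2 c3 xy(2) unfolding Q_def by algebra
      moreover have "al2 (A j) * Q = 0" using c1 c2 c3 xy(2) unfolding Q_def by algebra
      moreover have "al3 (A j) * Q = 0" using c1 c2 c3 xy(2) unfolding Q_def by algebra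
      ultimately have "Q = 0" using j(2) by auto
      then show "cdet (vector [x, y]) (A k *v vector [x, y]) = 0"
        by (simp add: cdet_q Q_def)
    qed
  qed
qed

lemma P3f:
  fixes A :: "nat \<Rightarrow> complex^2^2"
  assumes dets: "\<forall>i\<in>I. det (A i) = 1"
    and v: "v \<noteq> 0" "\<forall>i\<in>I. cdet v (A i *v v) = 0"
  shows "\<forall>j\<in>I. \<forall>k\<in>I. \<forall>l\<in>I. sigma2 (A j) (A k) = 0 \<and> Delta2 (A j) (A k) (A l) = 0"
proof (intro ballI conjI)
  fix j k l assume jkl: "j \<in> I" "k \<in> I" "l \<in> I"
  define x where "x = v$1"
  define y where "y = v$2"
  have xy: "x \<noteq> 0 \<or> y \<noteq> 0" using v(1) by (simp add: vec2_nz x_def y_def)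
  have q: "al1 (A i) * x^2 + al2 (A i) * (x*y) + al3 (A i) * y^2 = 0" if "i \<in> I" for i
    using v(2) that by (simp add: cdet_q x_def y_def)
  define D where "D = al1 (A l) * cw1 (A j) (A k) + al2 (A l) * cw2 (A j) (A k) + al3 (A l) * cw3 (A j) (A k)"
  have "D * x^2 = 0"
    using q[OF jkl(1)] q[OF jkl(2)] q[OF jkl(3)] unfolding D_def cw1_def cw2_def cw3_def by algebra
  moreover have "D * y^2 = 0"
    using q[OF jkl(1)] q[OF jkl(2)] q[OF jkl(3)] unfolding D_def cw1_def cw2_def cw3_def by algebra
  ultimately have "D = 0" using xy by auto
  then show "Delta2 (A j) (A k) (A l) = 0" by (simp add: K2 D_def)
  define S where "S = (cw2 (A j) (A k))^2 - cw1 (A j) (A k) * cw3 (A j) (A k)"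
  have "S * x^4 = 0"
    using q[OF jkl(1)] q[OF jkl(2)] unfolding S_def cw1_def cw2_def cw3_def by algebra
  moreover have "S * y^4 = 0"
    using q[OF jkl(1)] q[OF jkl(2)] unfolding S_def cw1_def cw2_def cw3_def by algebra
  ultimately have "S = 0" using xy by auto
  then show "sigma2 (A j) (A k) = 0" using K1[of "A j" "A k"] dets jkl by (simp add: S_def)
qed



lemma cdet_par: assumes "(v::complex^2) \<noteq> 0" "cdet v u = 0" shows "\<exists>c. u = c *s v"
proof (cases "v$1 = 0")
  case True
  then have "v$2 \<noteq> 0" using assms(1) by (simp add: vec2_nz)
  have "u = (u$2 / v$2) *s v" using True assms(2) \<open>v$2 \<noteq> 0\<close>
    by (auto simp: vec_eq_iff forall_2 cdet_def field_simps)
  then show ?thesis by blast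
next
  case False
  have "u = (u$1 / v$1) *s v" using False assms(2)
    by (auto simp: vec_eq_iff forall_2 cdet_def field_simps)
  then show ?thesis by blast
qed

lemma cdet_smult: "cdet v (c *s v) = 0"
  by (simp add: cdet_def)

lemma cdet_eig: "cdet v (M *v v) = 0 \<longleftrightarrow> (\<exists>c. M *v v = c *s v)" if "v \<noteq> 0"
  using cdet_par[OF that] cdet_smult by metis

lemma P1: "reducible_rep G \<rho> \<longleftrightarrow> (\<exists>v::complex^2. v \<noteq> 0 \<and> (\<forall>g\<in>carrier G. cdet v (\<rho> g *v v) = 0))"
proof
  assume "reducible_rep G \<rho>"
  then obtain V where V: "csubspace2 V" "V \<noteq> {0}" "V \<noteq> UNIV"
    "\<forall>g\<in>carrier G. \<forall>v\<in>V. \<rho> g *v v \<in> V"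
    unfolding reducible_rep_def by blast
  have z: "0 \<in> V" and add: "\<And>x y. x \<in> V \<Longrightarrow> y \<in> V \<Longrightarrow> x + y \<in> V"
    and sc: "\<And>c x. x \<in> V \<Longrightarrow> c *s x \<in> V"
    using V(1) unfolding csubspace2_def by auto
  obtain v where v: "v \<in> V" "v \<noteq> 0" using V(2) z by blast
  have all: "cdet v w = 0" if w: "w \<in> V" for w
  proof (rule ccontr)
    assume D: "cdet v w \<noteq> 0"
    have "z \<in> V" for z
    proof -
      define a where "a = (z$1 * w$2 - z$2 * w$1) / cdet v w"
      define b where "b = (v$1 * z$2 - v$2 * z$1) / cdet v w"
      have ha: "a * cdet v w = z$1 * w$2 - z$2 * w$1" using D by (simp add: a_def)
      have hb: "b * cdet v w = v$1 * z$2 - v$2 * z$1" using D by (simp add: b_def)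
      have "(a * v$1 + b * w$1) * cdet v w = z$1 * cdet v w" using ha hb unfolding cdet_def by algebra
      then have e1: "a * v$1 + b * w$1 = z$1" using D by simp
      have "(a * v$2 + b * w$2) * cdet v w = z$2 * cdet v w" using ha hb unfolding cdet_def by algebra
      then have e2: "a * v$2 + b * w$2 = z$2" using D by simp
      have "z = a *s v + b *s w" using e1 e2 by (auto simp: vec_eq_iff forall_2)
      then show ?thesis using add sc v(1) w by metis
    qed
    then show False using V(3) by blast
  qed
  show "\<exists>v::complex^2. v \<noteq> 0 \<and> (\<forall>g\<in>carrier G. cdet v (\<rho> g *v v) = 0)"
    using v V(4) all by blast
next
  assume "\<exists>v::complex^2. v \<noteq> 0 \<and> (\<forall>g\<in>carrier G. cdet v (\<rho> g *v v) = 0)"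
  then obtain v :: "complex^2" where v: "v \<noteq> 0" "\<forall>g\<in>carrier G. cdet v (\<rho> g *v v) = 0" by blast
  define V where "V = range (\<lambda>c. c *s v)"
  have "csubspace2 V" unfolding csubspace2_def V_def
  proof (intro conjI ballI allI)
    show "0 \<in> range (\<lambda>c. c *s v)" by (rule range_eqI[where x=0]) simp
  next
    fix x y assume "x \<in> range (\<lambda>c. c *s v)" "y \<in> range (\<lambda>c. c *s v)"
    then obtain a b where "x = a *s v" "y = b *s v" by blast
    then show "x + y \<in> range (\<lambda>c. c *s v)" by (intro range_eqI[where x="a+b"]) (simp add: vector_sadd_rdistrib)
  next
    fix c x assume "x \<in> range (\<lambda>c. c *s v)"
    then obtain a where "x = a *s v" by blast
    then show "c *s x \<in> range (\<lambda>c. c *s v)" by (intro range_eqI[where x="c*a"]) simp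
  qed
  moreover have "V \<noteq> {0}" using v(1) unfolding V_def by (metis rangeI singletonD vector_smult_lid)
  moreover have "V \<noteq> UNIV"
  proof
    assume U: "V = UNIV"
    obtain z where "cdet v z \<noteq> 0"
    proof (cases "v$1 = 0")
      case True
      then have "v$2 \<noteq> 0" using v(1) by (simp add: vec2_nz)
      then show ?thesis using True by (intro that[of "vector [1,0]"]) (simp add: cdet_def)
    next
      case False
      then show ?thesis by (intro that[of "vector [0,1]"]) (simp add: cdet_def)
    qed
    moreover have "z \<in> V" using U by simp
    ultimately show False unfolding V_def using cdet_smult by auto
  qed
  moreover have "\<forall>g\<in>carrier G. \<forall>w\<in>V. \<rho> g *v w \<in> V"
  proof (intro ballI)
    fix g w assume g: "g \<in> carrier G" and "w \<in> V"
    then obtain a where w: "w = a *s v" unfolding V_def by blast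
    obtain c where "\<rho> g *v v = c *s v" using cdet_par[OF v(1)] v(2) g by blast
    then have "\<rho> g *v w = (a*c) *s v" by (simp add: w vector_scalar_commute)
    then show "\<rho> g *v w \<in> V" unfolding V_def by blast
  qed
  ultimately show "reducible_rep G \<rho>" unfolding reducible_rep_def by blast
qed

lemma P2:
  fixes G :: "('g, 'b) monoid_scheme" and \<rho> :: "'g \<Rightarrow> complex^2^2"
  assumes grp: "group G" and S: "S \<subseteq> carrier G" and gen: "carrier G = generate G S"
    and hom: "\<rho> \<in> hom G SL2C" and v: "(v::complex^2) \<noteq> 0"
    and sv: "\<forall>s\<in>S. cdet v (\<rho> s *v v) = 0"
  shows "\<forall>g\<in>carrier G. cdet v (\<rho> g *v v) = 0"
proof -
  interpret group G by (rule grp)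
  have dets: "det (\<rho> g) = 1" if "g \<in> carrier G" for g
    using hom that unfolding hom_def SL2C_def by auto
  have mul: "\<rho> (g \<otimes>\<^bsub>G\<^esub> h) = \<rho> g ** \<rho> h" if "g \<in> carrier G" "h \<in> carrier G" for g h
    using hom that unfolding hom_def SL2C_def by auto
  have one: "\<rho> \<one>\<^bsub>G\<^esub> = mat 1"
  proof -
    have e: "\<rho> \<one>\<^bsub>G\<^esub> = \<rho> \<one>\<^bsub>G\<^esub> ** \<rho> \<one>\<^bsub>G\<^esub>" using mul[of "\<one>\<^bsub>G\<^esub>" "\<one>\<^bsub>G\<^esub>"] by simp
    have "mat 1 = adj2 (\<rho> \<one>\<^bsub>G\<^esub>) ** \<rho> \<one>\<^bsub>G\<^esub>" using adj2_inv(2)[OF dets[of "\<one>\<^bsub>G\<^esub>"]] by simp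
    also have "\<dots> = adj2 (\<rho> \<one>\<^bsub>G\<^esub>) ** \<rho> \<one>\<^bsub>G\<^esub> ** \<rho> \<one>\<^bsub>G\<^esub>" by (subst e) (simp add: matrix_mul_assoc)
    also have "\<dots> = \<rho> \<one>\<^bsub>G\<^esub>" using adj2_inv(2)[OF dets[of "\<one>\<^bsub>G\<^esub>"]] by simp
    finally show ?thesis by simp
  qed
  have "\<exists>c. \<rho> g *v v = c *s v" if "g \<in> generate G S" for g
    using that
  proof (induction rule: generate.induct)
    case one
    show ?case by (intro exI[of _ 1]) (simp add: \<open>\<rho> \<one>\<^bsub>G\<^esub> = mat 1\<close>)
  next
    case (incl h)
    then show ?case using sv cdet_par[OF v] by blast
  next
    case (inv h)
    have hc: "h \<in> carrier G" using inv S by blast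
    obtain c where c: "\<rho> h *v v = c *s v" using sv inv cdet_par[OF v] by blast
    have "\<rho> (inv\<^bsub>G\<^esub> h) ** \<rho> h = mat 1" using mul[of "inv\<^bsub>G\<^esub> h" h] hc one by simp
    then have "v = \<rho> (inv\<^bsub>G\<^esub> h) *v (\<rho> h *v v)" by (simp add: matrix_vector_mul_assoc)
    also have "\<dots> = c *s (\<rho> (inv\<^bsub>G\<^esub> h) *v v)" by (simp add: c vector_scalar_commute)
    finally have e: "v = c *s (\<rho> (inv\<^bsub>G\<^esub> h) *v v)" .
    then have "c \<noteq> 0" using v by auto
    then have "\<rho> (inv\<^bsub>G\<^esub> h) *v v = (1/c) *s v" by (subst e) simp
    then show ?case by blast
  next
    case (eng h1 h2)
    have "h1 \<in> carrier G" "h2 \<in> carrier G" using eng.hyps gen by auto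
    then have "\<rho> (h1 \<otimes>\<^bsub>G\<^esub> h2) = \<rho> h1 ** \<rho> h2" by (rule mul)
    moreover obtain a b where "\<rho> h1 *v v = a *s v" "\<rho> h2 *v v = b *s v" using eng.IH by blast
    ultimately have "\<rho> (h1 \<otimes>\<^bsub>G\<^esub> h2) *v v = (b * a) *s v"
      by (simp add: matrix_vector_mul_assoc[symmetric] vector_scalar_commute)
    then show ?case by blast
  qed
  then show ?thesis using gen cdet_smult by (metis)
qed


theorem theorem1p2:
  fixes G :: "('g, 'b) monoid_scheme" and eps :: "nat \<Rightarrow> 'g" and n :: nat
    and \<rho> :: "'g \<Rightarrow> complex^2^2"
  assumes "group G"
    and "eps ` {1..n} \<subseteq> carrier G"
    and "carrier G = generate G (eps ` {1..n})"
    and "\<rho> \<in> hom G SL2C"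
  shows "reducible_rep G \<rho> \<longleftrightarrow>
    (\<forall>j\<in>{1..n}. \<forall>k\<in>{1..n}. \<forall>l\<in>{1..n}.
       sigma2 (\<rho> (eps j)) (\<rho> (eps k)) = 0 \<and>
       Delta2 (\<rho> (eps j)) (\<rho> (eps k)) (\<rho> (eps l)) = 0)"
proof -
  define A where "A = (\<lambda>i. \<rho> (eps i))"
  have dets: "\<forall>i\<in>{1..n}. det (A i) = 1"
  proof
    fix i assume "i \<in> {1..n}"
    then have "eps i \<in> carrier G" using assms(2) by blast
    then show "det (A i) = 1" using assms(4) unfolding hom_def SL2C_def A_def by auto
  qed
  have "reducible_rep G \<rho> \<longleftrightarrow>
    (\<forall>j\<in>{1..n}. \<forall>k\<in>{1..n}. \<forall>l\<in>{1..n}.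
       sigma2 (A j) (A k) = 0 \<and> Delta2 (A j) (A k) (A l) = 0)"
  proof
    assume "reducible_rep G \<rho>"
    then obtain v :: "complex^2" where v: "v \<noteq> 0" "\<forall>g\<in>carrier G. cdet v (\<rho> g *v v) = 0"
      unfolding P1 by blast
    have "\<forall>i\<in>{1..n}. cdet v (A i *v v) = 0"
    proof
      fix i assume "i \<in> {1..n}"
      then have "eps i \<in> carrier G" using assms(2) by blast
      then show "cdet v (A i *v v) = 0" using v(2) unfolding A_def by blast
    qed
    then show "\<forall>j\<in>{1..n}. \<forall>k\<in>{1..n}. \<forall>l\<in>{1..n}.
       sigma2 (A j) (A k) = 0 \<and> Delta2 (A j) (A k) (A l) = 0"
      by (rule P3f[OF dets v(1)])
  next
    assume c: "\<forall>j\<in>{1..n}. \<forall>k\<in>{1..n}. \<forall>l\<in>{1..n}.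
       sigma2 (A j) (A k) = 0 \<and> Delta2 (A j) (A k) (A l) = 0"
    obtain v :: "complex^2" where v: "v \<noteq> 0" "\<forall>i\<in>{1..n}. cdet v (A i *v v) = 0"
      using P3r[OF dets c] by blast
    have "\<forall>s\<in>eps ` {1..n}. cdet v (\<rho> s *v v) = 0"
    proof
      fix s assume "s \<in> eps ` {1..n}"
      then obtain i where "i \<in> {1..n}" "s = eps i" by blast
      then show "cdet v (\<rho> s *v v) = 0" using v(2) unfolding A_def by blast
    qed
    then have "\<forall>g\<in>carrier G. cdet v (\<rho> g *v v) = 0"
      by (rule P2[OF assms(1,2,3,4) v(1)])
    then show "reducible_rep G \<rho>" unfolding P1 using v(1) by blast
  qed
  then show ?thesis unfolding A_def .
qed
end
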